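(* For all positive integers $n,m$, \[s\text{-}sat(Q_n,Q_m)<\Big(m^2+\frac{m}{2}\Big)2^n.\]
   Context: $Q_n$ is the hypercube on $\{0,1\}^n$ with edges between vertices differing in exactly one coordinate. A copy of $F$ is a subgraph isomorphic to $F$. A graph $G$ is $(Q_n,F)$-semi-saturated if $G$ is a subgraph of $Q_n$ and adding any edge of $E(Q_n)\setminus E(G)$ increases the number of copies of $F$. $s\text{-}sat(Q_n,F)$ is the minimum number of edges of a $(Q_n,F)$-semi-saturated graph. *)

theory Defs
  imports Complex_Main
begin

text \<open>Vertices of Q_n: subsets of {..<n} (characteristic sets of 0/1 vectors).
  Two vertices are adjacent iff they differ in exactly one coordinate.
  Edges are 2-element sets of vertices.\<close>

definition qverts :: "nat \<Rightarrow> nat set set" where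
  "qverts n = Pow {..<n}"

definition qadj :: "nat set \<Rightarrow> nat set \<Rightarrow> bool" where
  "qadj u v \<longleftrightarrow> card ((u - v) \<union> (v - u)) = 1"

definition qedges :: "nat \<Rightarrow> nat set set set" where
  "qedges n = {{u, v} | u v. u \<in> qverts n \<and> v \<in> qverts n \<and> qadj u v}"

definition cube_copies :: "nat \<Rightarrow> nat \<Rightarrow> nat set set set \<Rightarrow> (nat set set \<times> nat set set set) set" where
  "cube_copies n m G = {(V, E). V \<subseteq> qverts n \<and> E \<subseteq> G \<and> (\<forall>e\<in>E. e \<subseteq> V) \<and>
      (\<exists>f. bij_betw f (qverts m) V \<and>
           (\<forall>u\<in>qverts m. \<forall>v\<in>qverts m. ({f u, f v} \<in> E \<longleftrightarrow> qadj u v)))}"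

definition semi_saturated :: "nat \<Rightarrow> nat \<Rightarrow> nat set set set \<Rightarrow> bool" where
  "semi_saturated n m G \<longleftrightarrow> G \<subseteq> qedges n \<and>
     (\<forall>e \<in> qedges n - G. card (cube_copies n m G) < card (cube_copies n m (insert e G)))"

definition s_sat :: "nat \<Rightarrow> nat \<Rightarrow> nat" where
  "s_sat n m = (LEAST k. \<exists>G. semi_saturated n m G \<and> card G = k)"

end

theory Submission
  imports "HOL-Library.Nat_Bijection" Defs
begin

abbreviation sd :: "nat set \<Rightarrow> nat set \<Rightarrow> nat set" where
  "sd a b \<equiv> (a - b) \<union> (b - a)"

lemma qedges_sub: "qedges n \<subseteq> Pow (qverts n)"
  unfolding qedges_def by auto

lemma finite_qverts: "finite (qverts n)"
  unfolding qverts_def by simp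

lemma finite_qedges: "finite (qedges n)"
  using qedges_sub finite_qverts by (meson finite_Pow_iff rev_finite_subset)

lemma finite_copies:
  assumes "G \<subseteq> qedges n"
  shows "finite (cube_copies n m G)"
proof -
  have "cube_copies n m G \<subseteq> Pow (qverts n) \<times> Pow G"
    unfolding cube_copies_def by auto
  moreover have "finite (Pow (qverts n) \<times> Pow G)"
    using assms finite_qedges finite_qverts by (meson finite_Pow_iff finite_SigmaI rev_finite_subset)
  ultimately show ?thesis by (rule finite_subset)
qed

lemma copies_mono: "G \<subseteq> G' \<Longrightarrow> cube_copies n m G \<subseteq> cube_copies n m G'"
  unfolding cube_copies_def by blast

lemma card_increase:
  assumes "e \<in> qedges n" "e \<notin> G" "G \<subseteq> qedges n"
    and "(V, E) \<in> cube_copies n m (insert e G)" "e \<in> E"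
  shows "card (cube_copies n m G) < card (cube_copies n m (insert e G))"
proof (rule psubset_card_mono)
  show "finite (cube_copies n m (insert e G))"
    using assms by (intro finite_copies) auto
  have "(V, E) \<notin> cube_copies n m G"
    using assms(2,5) unfolding cube_copies_def by auto
  then show "cube_copies n m G \<subset> cube_copies n m (insert e G)"
    using copies_mono[of G "insert e G"] assms(4) by blast
qed

lemma sd_doubleton: "{a, b} = {c, d} \<Longrightarrow> sd a b = sd c d"
  by (auto simp: doubleton_eq_iff)

lemma cube_copy:
  fixes x :: "nat set" and g :: "nat \<Rightarrow> nat"
  assumes x: "x \<subseteq> {..<n}" and inj: "inj_on g {..<m}" and gn: "g ` {..<m} \<subseteq> {..<n}"
  defines "f \<equiv> \<lambda>A. sd x (g ` A)"
  defines "E \<equiv> {{f u, f v} | u v. u \<in> qverts m \<and> v \<in> qverts m \<and> qadj u v}"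
  assumes EG: "E \<subseteq> G'"
  shows "(f ` qverts m, E) \<in> cube_copies n m G'"
proof -
  have sdf: "sd (f A) (f B) = g ` (sd A B)" if "A \<subseteq> {..<m}" "B \<subseteq> {..<m}" for A B
  proof -
    have "sd (f A) (f B) = sd (g ` A) (g ` B)" unfolding f_def by blast
    also have "\<dots> = g ` (sd A B)"
      using inj that by (auto simp: inj_on_def)
    finally show ?thesis .
  qed
  have qf: "qadj (f A) (f B) \<longleftrightarrow> qadj A B" if "A \<subseteq> {..<m}" "B \<subseteq> {..<m}" for A B
  proof -
    have "inj_on g (sd A B)" using inj that by (meson inj_on_subset Un_least Diff_subset subset_trans)
    then show ?thesis unfolding qadj_def using sdf[OF that] by (simp add: card_image)
  qed
  have injf: "inj_on f (qverts m)"
  proof (rule inj_onI)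
    fix A B assume AB: "A \<in> qverts m" "B \<in> qverts m" "f A = f B"
    then have "g ` sd A B = {}" using sdf[of A B] by (auto simp: qverts_def)
    then show "A = B" by blast
  qed
  show ?thesis unfolding cube_copies_def
  proof (clarsimp, intro conjI)
    show "f ` qverts m \<subseteq> qverts n" using x gn by (auto simp: f_def qverts_def)
    show "E \<subseteq> G'" by fact
    show "\<forall>e\<in>E. e \<subseteq> f ` qverts m" unfolding E_def by auto
    show "\<exists>h. bij_betw h (qverts m) (f ` qverts m) \<and>
        (\<forall>u\<in>qverts m. \<forall>v\<in>qverts m. ({h u, h v} \<in> E) = qadj u v)"
    proof (intro exI conjI ballI)
      show "bij_betw f (qverts m) (f ` qverts m)" using injf by (simp add: bij_betw_def)
      fix u v assume uv: "u \<in> qverts m" "v \<in> qverts m"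
      show "({f u, f v} \<in> E) = qadj u v"
      proof
        assume "{f u, f v} \<in> E"
        then obtain u' v' where "{f u, f v} = {f u', f v'}" "u' \<in> qverts m" "v' \<in> qverts m" "qadj u' v'"
          unfolding E_def by blast
        then have "qadj (f u') (f v')" using qf by (auto simp: qverts_def)
        then have "qadj (f u) (f v)" using sd_doubleton[OF \<open>{f u, f v} = _\<close>] by (simp add: qadj_def)
        then show "qadj u v" using qf uv by (auto simp: qverts_def)
      next
        assume "qadj u v" then show "{f u, f v} \<in> E" using uv unfolding E_def by blast
      qed
    qed
  qed
qed


lemma set_encode_less: "A \<subseteq> {..<r} \<Longrightarrow> set_encode A < 2 ^ r"
proof (induction r arbitrary: A)
  case 0 then show ?case by simp
next
  case (Suc r)
  have fin: "finite (A - {r})" using Suc.prems finite_subset by blast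
  have "A - {r} \<subseteq> {..<r}" using Suc.prems by auto
  then have "set_encode (A - {r}) < 2 ^ r" using Suc.IH by blast
  show ?case
  proof (cases "r \<in> A")
    case True
    then have "A = insert r (A - {r})" by auto
    then have "set_encode A = set_encode (insert r (A - {r}))" by simp
    also have "\<dots> = 2 ^ r + set_encode (A - {r})" by (rule set_encode_insert) (use fin in auto)
    finally show ?thesis using \<open>set_encode (A - {r}) < 2 ^ r\<close> by simp
  next
    case False
    then have "A = A - {r}" by auto
    then have "set_encode A < 2 ^ r" using \<open>set_encode (A - {r}) < 2 ^ r\<close> by simp
    also have "(2::nat) ^ r \<le> 2 ^ Suc r" by simp
    finally show ?thesis .
  qed
qed

locale cons =
  fixes r q m n :: nat
  assumes r1: "r \<ge> 1" and qdef: "q = 2^r - 1" and mq: "m*q \<le> n" and m1: "m \<ge> 1"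
begin

definition T where "T i = {i*q..<(i+1)*q}"
definition lab where "lab p = set_decode (p mod q + 1)"
definition syn where "syn i y = {b. b < r \<and> odd (card {p \<in> y \<inter> T i. b \<in> lab p})}"
definition bl where "bl j = min (j div q) (m - 1)"
definition Cd where "Cd U i = {y \<in> Pow U. syn i y = {}}"

lemma q1: "q \<ge> 1"
proof -
  have "2 ^ r \<ge> (2::nat) ^ 1" using r1 by (intro power_increasing) auto
  then show ?thesis using qdef by simp
qed

lemma T_mem: "p \<in> T i \<longleftrightarrow> p div q = i"
proof -
  have "p \<in> T i \<longleftrightarrow> i * q \<le> p \<and> p < (i+1)*q" by (simp add: T_def)
  also have "\<dots> \<longleftrightarrow> p div q = i"
  proof
    assume "i * q \<le> p \<and> p < (i+1)*q"
    then show "p div q = i" by (intro div_nat_eqI) (auto simp: mult.commute)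
  next
    assume "p div q = i"
    moreover have "p div q * q \<le> p" by simp
    moreover have "p < q + p div q * q" using q1 by (intro dividend_less_div_times) simp
    ultimately show "i * q \<le> p \<and> p < (i+1)*q" by (simp add: add.commute)
  qed
  finally show ?thesis .
qed

lemma finite_T: "finite (T i)" by (simp add: T_def)
lemma card_T: "card (T i) = q" by (simp add: T_def)

lemma T_sub: "i < m \<Longrightarrow> T i \<subseteq> {..<n}"
proof -
  assume "i < m"
  then have "(i+1)*q \<le> m*q" by (intro mult_le_mono1) simp
  then show ?thesis using mq by (auto simp: T_def)
qed

lemma T_disj: "p \<in> T i \<Longrightarrow> p \<in> T k \<Longrightarrow> i = k"
  by (simp add: T_mem)

lemma j_notin: "i < m \<Longrightarrow> i \<noteq> bl j \<Longrightarrow> j \<notin> T i"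
  by (auto simp: T_mem bl_def)

lemma bl_less: "bl j < m" using m1 by (simp add: bl_def)

lemma syn_cong: "y \<inter> T i = z \<inter> T i \<Longrightarrow> syn i y = syn i z"
  unfolding syn_def by simp

lemma syn_sub: "syn i y \<subseteq> {..<r}" by (auto simp: syn_def)

lemma syn_flip:
  assumes p: "p \<in> T i"
  shows "syn i (sd y {p}) = sd (syn i y) (lab p \<inter> {..<r})"
proof -
  have key: "odd (card {p' \<in> sd y {p} \<inter> T i. b \<in> lab p'}) \<longleftrightarrow>
      (odd (card {p' \<in> y \<inter> T i. b \<in> lab p'}) \<longleftrightarrow> b \<notin> lab p)" for b
  proof -
    define S where "S = {p' \<in> y \<inter> T i. b \<in> lab p'}"
    have finS: "finite S" unfolding S_def using finite_T by auto
    show ?thesis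
    proof (cases "b \<in> lab p")
      case False
      then have eq: "{p' \<in> sd y {p} \<inter> T i. b \<in> lab p'} = S" unfolding S_def by auto
      show ?thesis unfolding eq S_def[symmetric] using False by simp
    next
      case True
      show ?thesis
      proof (cases "p \<in> S")
        case True': True
        then have eq: "{p' \<in> sd y {p} \<inter> T i. b \<in> lab p'} = S - {p}" unfolding S_def by auto
        have "card S \<noteq> 0" using True' finS by auto
        moreover have "card (S - {p}) = card S - 1" using True' finS by simp
        ultimately show ?thesis unfolding eq S_def[symmetric] using True by (cases "card S"; simp)
      next
        case False
        then have eq: "{p' \<in> sd y {p} \<inter> T i. b \<in> lab p'} = insert p S"
          unfolding S_def using p \<open>b \<in> lab p\<close> by auto
        show ?thesis unfolding eq S_def[symmetric] using True finS False by simp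
      qed
    qed
  qed
  show ?thesis unfolding syn_def using key by auto
qed

lemma lab_hit:
  assumes "\<sigma> \<subseteq> {..<r}" "\<sigma> \<noteq> {}"
  shows "\<exists>p \<in> T i. lab p = \<sigma>"
proof -
  have fin: "finite \<sigma>" using assms finite_subset by blast
  define k where "k = set_encode \<sigma>"
  have k0: "k \<noteq> 0" using assms fin set_encode_eq[of \<sigma> "{}"] unfolding k_def by simp
  have kr: "k < 2 ^ r" using set_encode_less assms unfolding k_def by blast
  define p where "p = i * q + (k - 1)"
  have "k - 1 < q" using k0 kr qdef by simp
  then have pm: "p mod q = k - 1" and pd: "p div q = i" unfolding p_def using q1
    by (simp_all add: add.commute)
  have "lab p = \<sigma>" unfolding lab_def pm using k0 fin k_def by simp
  moreover have "p \<in> T i" using pd T_mem by simp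
  ultimately show ?thesis by blast
qed

lemma dominate:
  assumes "syn i y \<noteq> {}"
  shows "\<exists>p \<in> T i. syn i (sd y {p}) = {}"
proof -
  obtain p where p: "p \<in> T i" "lab p = syn i y" using lab_hit[OF syn_sub assms] by blast
  then have "lab p \<inter> {..<r} = syn i y" using syn_sub by blast
  then show ?thesis using syn_flip[OF p(1), of y] p by auto
qed

end

lemma edge_in_qedges:
  assumes "y \<subseteq> {..<n}" "p < n"
  shows "{y, sd y {p}} \<in> qedges n"
proof -
  have "sd y (sd y {p}) = {p}" by auto
  then have "qadj y (sd y {p})" unfolding qadj_def by simp
  moreover have "sd y {p} \<subseteq> {..<n}" using assms by auto
  ultimately show ?thesis using assms unfolding qedges_def qverts_def by blast
qed

context cons begin

lemma count:
  assumes U: "finite U" "T i \<subseteq> U"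
  shows "card (Cd U i) * 2 ^ r = 2 ^ card U"
proof -
  define C where "C \<sigma> = {y \<in> Pow U. syn i y = \<sigma>}" for \<sigma>
  have Cd: "Cd U i = C {}" by (simp add: C_def Cd_def)
  have PU: "Pow U = (\<Union>\<sigma> \<in> Pow {..<r}. C \<sigma>)"
  proof (intro equalityI subsetI)
    fix y assume y: "y \<in> Pow U"
    have "y \<in> C (syn i y)" using y unfolding C_def by blast
    moreover have "syn i y \<in> Pow {..<r}" using syn_sub[of i y] by blast
    ultimately show "y \<in> (\<Union>\<sigma> \<in> Pow {..<r}. C \<sigma>)" by blast
  next
    fix y assume "y \<in> (\<Union>\<sigma> \<in> Pow {..<r}. C \<sigma>)"
    then show "y \<in> Pow U" unfolding C_def by blast
  qed
  have finC: "finite (C \<sigma>)" for \<sigma> unfolding C_def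
    by (rule finite_subset[of _ "Pow U"]) (use U(1) in auto)
  have "card (Pow U) = (\<Sum>\<sigma> \<in> Pow {..<r}. card (C \<sigma>))"
    unfolding PU
  proof (rule card_UN_disjoint)
    show "finite (Pow {..<r})" by simp
    show "\<forall>\<sigma>\<in>Pow {..<r}. finite (C \<sigma>)" using finC by blast
    show "\<forall>\<sigma>\<in>Pow {..<r}. \<forall>\<tau>\<in>Pow {..<r}. \<sigma> \<noteq> \<tau> \<longrightarrow> C \<sigma> \<inter> C \<tau> = {}"
      unfolding C_def by blast
  qed
  also have "\<dots> = (\<Sum>\<sigma> \<in> Pow {..<r}. card (C {}))"
  proof (rule sum.cong)
    fix \<sigma> assume s: "\<sigma> \<in> Pow {..<r}"
    show "card (C \<sigma>) = card (C {})"
    proof (cases "\<sigma> = {}")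
      case False
      obtain p where p: "p \<in> T i" "lab p = \<sigma>" using lab_hit[of \<sigma> i] s False by auto
      have ls: "lab p \<inter> {..<r} = \<sigma>" using p s by auto
      have inv: "sd (sd y {p}) {p} = y" for y by auto
      have inj: "inj_on (\<lambda>y. sd y {p}) (C {})"
      proof (rule inj_onI)
        fix y y' assume "sd y {p} = sd y' {p}"
        then have "sd (sd y {p}) {p} = sd (sd y' {p}) {p}" by simp
        then show "y = y'" by (simp only: inv)
      qed
      have pU: "p \<in> U" using p(1) U(2) by blast
      have "(\<lambda>y. sd y {p}) ` C {} = C \<sigma>"
      proof
        show "(\<lambda>y. sd y {p}) ` C {} \<subseteq> C \<sigma>"
        proof
          fix z assume "z \<in> (\<lambda>y. sd y {p}) ` C {}"
          then obtain y where y: "y \<subseteq> U" "syn i y = {}" "z = sd y {p}" by (auto simp: C_def)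
          have "syn i z = sd {} (lab p \<inter> {..<r})" using syn_flip[OF p(1), of y] y by simp
          then have "syn i z = \<sigma>" using ls by simp
          moreover have "z \<subseteq> U" using y pU by blast
          ultimately show "z \<in> C \<sigma>" by (simp add: C_def)
        qed
        show "C \<sigma> \<subseteq> (\<lambda>y. sd y {p}) ` C {}"
        proof
          fix z assume z: "z \<in> C \<sigma>"
          then have zU: "z \<subseteq> U" and sz: "syn i z = \<sigma>" by (auto simp: C_def)
          have "syn i (sd z {p}) = sd \<sigma> \<sigma>" using syn_flip[OF p(1), of z] sz ls by simp
          then have "syn i (sd z {p}) = {}" by simp
          moreover have "sd z {p} \<subseteq> U" using zU pU by blast
          ultimately have "sd z {p} \<in> C {}" by (simp add: C_def)
          moreover have "z = sd (sd z {p}) {p}" by (simp only: inv)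
          ultimately show "z \<in> (\<lambda>y. sd y {p}) ` C {}" by blast
        qed
      qed
      then show ?thesis using card_image[OF inj] by simp
    qed simp
  qed simp
  also have "\<dots> = 2 ^ r * card (C {})" by (simp add: card_Pow)
  finally show ?thesis using U(1) Cd by (simp add: card_Pow mult.commute)
qed

lemma finite_Cd: "finite U \<Longrightarrow> finite (Cd U i)"
  unfolding Cd_def by (rule finite_subset[of _ "Pow U"]) auto

definition Star where "Star i = {{y, sd y {p}} | y p. y \<in> Pow {..<n} \<and> p \<in> T i \<and> syn i y = {}}"
definition Hub where "Hub j = {{y, sd y {j}} | y. y \<in> Pow {..<n} \<and> (\<exists>i<m. i \<noteq> bl j \<and> syn i y = {})}"
definition GG where "GG = (\<Union>i<m. Star i) \<union> (\<Union>j<n. Hub j)"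

lemma GG_sub: "GG \<subseteq> qedges n"
proof -
  have "Star i \<subseteq> qedges n" if "i < m" for i
    using T_sub[OF that] edge_in_qedges unfolding Star_def by blast
  moreover have "Hub j \<subseteq> qedges n" if "j < n" for j
    using that edge_in_qedges unfolding Hub_def by blast
  ultimately show ?thesis unfolding GG_def by blast
qed

lemma card_Star: "i < m \<Longrightarrow> card (Star i) * 2 ^ r \<le> q * 2 ^ n"
proof -
  assume i: "i < m"
  have eq: "Star i = (\<lambda>(y, p). {y, sd y {p}}) ` (Cd {..<n} i \<times> T i)"
    unfolding Star_def Cd_def by auto
  have fin: "finite (Cd {..<n} i \<times> T i)" using finite_Cd finite_T by blast
  have "card (Star i) \<le> card (Cd {..<n} i \<times> T i)" unfolding eq by (rule card_image_le[OF fin])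
  also have "\<dots> = card (Cd {..<n} i) * q" by (simp only: card_cartesian_product card_T)
  finally have "card (Star i) * 2 ^ r \<le> card (Cd {..<n} i) * q * 2 ^ r" by (rule mult_right_mono) simp
  also have "\<dots> = card (Cd {..<n} i) * 2 ^ r * q" by (simp only: mult_ac)
  also have "\<dots> = q * 2 ^ n" using count[of "{..<n}" i] T_sub[OF i] by simp
  finally show ?thesis .
qed

lemma card_Hub: "j < n \<Longrightarrow> card (Hub j) * 2 ^ r \<le> (m - 1) * 2 ^ (n - 1)"
proof -
  assume j: "j < n"
  define I where "I = {..<m} - {bl j}"
  have cI: "card I = m - 1" using bl_less by (simp add: I_def)
  have "Hub j \<subseteq> (\<Union>i\<in>I. (\<lambda>y. {y, insert j y}) ` Cd ({..<n} - {j}) i)"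
  proof
    fix e assume "e \<in> Hub j"
    then obtain y i where e: "e = {y, sd y {j}}" "y \<subseteq> {..<n}" "i < m" "i \<noteq> bl j" "syn i y = {}"
      unfolding Hub_def by blast
    have nj: "j \<notin> T i" using j_notin e by auto
    have "syn i (y - {j}) = syn i y" using nj by (intro syn_cong) auto
    then have "y - {j} \<in> Cd ({..<n} - {j}) i" using e by (auto simp: Cd_def)
    moreover have "e = {y - {j}, insert j (y - {j})}" using e(1) by auto
    ultimately show "e \<in> (\<Union>i\<in>I. (\<lambda>y. {y, insert j y}) ` Cd ({..<n} - {j}) i)"
      using e unfolding I_def by blast
  qed
  then have "card (Hub j) \<le> card (\<Union>i\<in>I. (\<lambda>y. {y, insert j y}) ` Cd ({..<n} - {j}) i)"
    by (intro card_mono) (auto simp: I_def Cd_def)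
  also have "\<dots> \<le> (\<Sum>i\<in>I. card ((\<lambda>y. {y, insert j y}) ` Cd ({..<n} - {j}) i))"
    by (rule card_UN_le) (simp add: I_def)
  also have "\<dots> \<le> (\<Sum>i\<in>I. card (Cd ({..<n} - {j}) i))"
    by (intro sum_mono card_image_le) (simp add: Cd_def)
  finally have "card (Hub j) * 2 ^ r \<le> (\<Sum>i\<in>I. card (Cd ({..<n} - {j}) i)) * 2 ^ r"
    by (rule mult_right_mono) simp
  also have "\<dots> = (\<Sum>i\<in>I. card (Cd ({..<n} - {j}) i) * 2 ^ r)"
    by (simp add: sum_distrib_right)
  also have "\<dots> = (\<Sum>i\<in>I. 2 ^ (n - 1))"
  proof (rule sum.cong)
    fix i assume "i \<in> I"
    then have "T i \<subseteq> {..<n} - {j}" using T_sub j_notin by (auto simp: I_def)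
    then show "card (Cd ({..<n} - {j}) i) * 2 ^ r = 2 ^ (n - 1)"
      using count[of "{..<n} - {j}" i] j by simp
  qed simp
  also have "\<dots> = (m - 1) * 2 ^ (n - 1)" using cI by simp
  finally show ?thesis .
qed

lemma card_GG: "card GG * 2 ^ r \<le> m * (q * 2 ^ n) + n * ((m - 1) * 2 ^ (n - 1))"
proof -
  have "card GG \<le> card (\<Union>i<m. Star i) + card (\<Union>j<n. Hub j)"
    unfolding GG_def by (rule card_Un_le)
  also have "\<dots> \<le> (\<Sum>i<m. card (Star i)) + (\<Sum>j<n. card (Hub j))"
    by (intro add_mono card_UN_le) auto
  finally have "card GG * 2 ^ r \<le> ((\<Sum>i<m. card (Star i)) + (\<Sum>j<n. card (Hub j))) * 2 ^ r"
    by (rule mult_right_mono) simp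
  also have "\<dots> = (\<Sum>i<m. card (Star i) * 2 ^ r) + (\<Sum>j<n. card (Hub j) * 2 ^ r)"
    by (simp only: distrib_right sum_distrib_right)
  also have "\<dots> \<le> (\<Sum>i<m. q * 2 ^ n) + (\<Sum>j<n. (m - 1) * 2 ^ (n - 1))"
    by (intro add_mono sum_mono card_Star card_Hub) auto
  also have "\<dots> = m * (q * 2 ^ n) + n * ((m - 1) * 2 ^ (n - 1))" by simp
  finally show ?thesis .
qed

end

lemma qedge_form:
  assumes "e \<in> qedges n"
  obtains x j where "e = {x, sd x {j}}" "x \<subseteq> {..<n}" "j < n"
proof -
  obtain x v where e: "e = {x, v}" "x \<subseteq> {..<n}" "v \<subseteq> {..<n}" "qadj x v"
    using assms unfolding qedges_def qverts_def by blast
  have "card (sd x v) = 1" using e(4) unfolding qadj_def .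
  then obtain j where j: "sd x v = {j}" by (rule card_1_singletonE)
  then have "v = sd x {j}" by blast
  moreover have "j < n" using j e by blast
  ultimately show ?thesis using that e by blast
qed

context cons begin

lemma sat: "semi_saturated n m GG"
  unfolding semi_saturated_def
proof (intro conjI ballI)
  show "GG \<subseteq> qedges n" by (rule GG_sub)
  fix e assume eG: "e \<in> qedges n - GG"
  then obtain x j where e: "e = {x, sd x {j}}" and x: "x \<subseteq> {..<n}" and j: "j < n"
    using qedge_form by blast
  have nz: "syn i x \<noteq> {}" if "i < m" "i \<noteq> bl j" for i
  proof
    assume "syn i x = {}"
    then have "e \<in> Hub j" unfolding Hub_def e using x that by blast
    then show False using eG j unfolding GG_def by blast
  qed
  define d where "d i = (SOME p. p \<in> T i \<and> syn i (sd x {p}) = {})" for i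
  have d: "d i \<in> T i \<and> syn i (sd x {d i}) = {}" if "i < m" "i \<noteq> bl j" for i
    unfolding d_def using dominate[OF nz[OF that]] by (rule someI2_bex) simp
  define g where "g i = (if i = bl j then j else d i)" for i
  have gT: "g i \<in> T k \<longleftrightarrow> i = k" if "i < m" "k < m" "k \<noteq> bl j" for i k
  proof (cases "i = bl j")
    case True
    then show ?thesis using j_notin[OF that(2,3)] that by (auto simp: g_def)
  next
    case False
    then show ?thesis using d[OF that(1) False] T_disj that by (auto simp: g_def)
  qed
  have inj: "inj_on g {..<m}"
  proof (rule inj_onI)
    fix a b assume ab: "a \<in> {..<m}" "b \<in> {..<m}" "g a = g b"
    show "a = b"
    proof (cases "a = bl j")
      case True
      show ?thesis
      proof (rule ccontr)
        assume "a \<noteq> b"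
        then have "b \<noteq> bl j" using True by simp
        then have "g b \<in> T b" using gT[of b b] ab by auto
        moreover have "g a \<notin> T b" using gT[of a b] ab \<open>a \<noteq> b\<close> \<open>b \<noteq> bl j\<close> by auto
        ultimately show False using ab by simp
      qed
    next
      case False
      then have "g a \<in> T a" using gT[of a a] ab by auto
      then have "g b \<in> T a" using ab by simp
      then show ?thesis using gT[of b a] ab False by auto
    qed
  qed
  have gn: "g ` {..<m} \<subseteq> {..<n}"
  proof
    fix z assume "z \<in> g ` {..<m}"
    then obtain i where i: "i < m" "z = g i" by auto
    show "z \<in> {..<n}"
    proof (cases "i = bl j")
      case True then show ?thesis using i j by (simp add: g_def)
    next
      case False then show ?thesis using i d[OF i(1) False] T_sub[OF i(1)] by (auto simp: g_def)
    qed
  qed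
  define f where "f A = sd x (g ` A)" for A
  define E where "E = {{f u, f v} | u v. u \<in> qverts m \<and> v \<in> qverts m \<and> qadj u v}"
  have fsub: "f A \<subseteq> {..<n}" if "A \<subseteq> {..<m}" for A
    using x gn that unfolding f_def by blast
  have sdf: "sd (f A) (f B) = g ` (sd A B)" if "A \<subseteq> {..<m}" "B \<subseteq> {..<m}" for A B
  proof -
    have "sd (f A) (f B) = sd (g ` A) (g ` B)" unfolding f_def by blast
    also have "\<dots> = g ` (sd A B)"
      using inj that by (auto simp: inj_on_def)
    finally show ?thesis .
  qed
  have fT: "syn k (f A) = {}" if "k < m" "k \<noteq> bl j" "A \<subseteq> {..<m}" "k \<in> A" for k A
  proof -
    have "g ` A \<inter> T k = {d k}"
    proof
      show "g ` A \<inter> T k \<subseteq> {d k}"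
      proof
        fix z assume "z \<in> g ` A \<inter> T k"
        then obtain a where a: "a \<in> A" "z = g a" "g a \<in> T k" by auto
        then have "a = k" using gT that by blast
        then show "z \<in> {d k}" using a that by (simp add: g_def)
      qed
      show "{d k} \<subseteq> g ` A \<inter> T k" using that d[OF that(1,2)] by (auto simp: g_def)
    qed
    then have "f A \<inter> T k = sd x {d k} \<inter> T k" unfolding f_def by blast
    then show ?thesis using syn_cong d[OF that(1,2)] by metis
  qed
  have EG: "E \<subseteq> insert e GG"
  proof
    fix ed assume "ed \<in> E"
    then obtain u v where uv: "ed = {f u, f v}" "u \<subseteq> {..<m}" "v \<subseteq> {..<m}" "qadj u v"
      unfolding E_def qverts_def by blast
    have "card (sd u v) = 1" using uv(4) unfolding qadj_def .
    then obtain i where i: "sd u v = {i}" by (rule card_1_singletonE)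
    have im: "i < m" using i uv by blast
    have "sd (f u) (f v) = {g i}" using sdf[OF uv(2,3)] i by simp
    then have fv: "f v = sd (f u) {g i}" and fu: "f u = sd (f v) {g i}" by blast+
    show "ed \<in> insert e GG"
    proof (cases "i = bl j")
      case True
      then have gi: "g i = j" by (simp add: g_def)
      show ?thesis
      proof (cases "\<exists>k \<in> u. k \<noteq> bl j")
        case True
        then obtain k where k: "k \<in> u" "k \<noteq> bl j" by blast
        have "syn k (f u) = {}" using fT[OF _ k(2) uv(2) k(1)] k uv by blast
        moreover have "k < m" using k uv by blast
        ultimately have "ed \<in> Hub j" unfolding Hub_def uv(1) fv gi using fsub[OF uv(2)] k by blast
        then show ?thesis using j unfolding GG_def by blast
      next
        case False
        then have "u \<subseteq> {bl j}" by blast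
        then have "u = {} \<or> u = {bl j}" by (rule subset_singletonD)
        then show ?thesis
        proof
          assume "u = {}"
          then have "f u = x" by (simp add: f_def)
          then show ?thesis unfolding uv(1) fv gi e by simp
        next
          assume "u = {bl j}"
          then have "f u = sd x {j}" by (simp add: f_def g_def)
          moreover have "sd (sd x {j}) {j} = x" by blast
          ultimately show ?thesis unfolding uv(1) fv gi e by auto
        qed
      qed
    next
      case False
      then have gi: "g i = d i" by (simp add: g_def)
      have dT: "d i \<in> T i" using d[OF im False] by blast
      show ?thesis
      proof (cases "i \<in> u")
        case True
        have "syn i (f u) = {}" using fT[OF im False uv(2) True] .
        then have "ed \<in> Star i" unfolding Star_def uv(1) fv gi using fsub[OF uv(2)] dT by blast
        then show ?thesis using im unfolding GG_def by blast
      next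
        case nu: False
        then have "i \<in> v" using i by blast
        then have "syn i (f v) = {}" using fT[OF im False uv(3)] by blast
        then have "{f v, sd (f v) {d i}} \<in> Star i" unfolding Star_def using fsub[OF uv(3)] dT by blast
        moreover have "ed = {f v, sd (f v) {d i}}" unfolding uv(1) fu gi by auto
        ultimately show ?thesis using im unfolding GG_def by blast
      qed
    qed
  qed
  have cc: "(f ` qverts m, E) \<in> cube_copies n m (insert e GG)"
    using cube_copy[OF x inj gn, of "insert e GG"] EG unfolding f_def E_def by simp
  have "f {} = x" by (simp add: f_def)
  moreover have "f {bl j} = sd x {j}" by (simp add: f_def g_def)
  moreover have "qadj {} {bl j}" by (simp add: qadj_def)
  moreover have "{} \<in> qverts m" "{bl j} \<in> qverts m" using bl_less by (auto simp: qverts_def)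
  ultimately have "e \<in> E" unfolding E_def e by blast
  show "card (cube_copies n m GG) < card (cube_copies n m (insert e GG))"
    using card_increase[OF _ _ GG_sub cc \<open>e \<in> E\<close>] eG by blast
qed

end

lemma exists_r:
  fixes m n :: nat
  assumes m1: "m \<ge> 1" and mn: "m \<le> n"
  shows "\<exists>r\<ge>1. m * (2 ^ r - 1) \<le> n \<and> n < m * 2 ^ (r + 1)"
proof -
  define P where "P r \<longleftrightarrow> m * (2 ^ r - 1) \<le> (n::nat)" for r
  have P1: "P 1" using mn by (simp add: P_def)
  have bnd: "y \<le> n" if "P y" for y
  proof -
    have "y < 2 ^ y" by (rule less_exp)
    then have "y \<le> 2 ^ y - 1" by arith
    also have "\<dots> \<le> m * (2 ^ y - 1)" using m1 by simp
    finally show "y \<le> n" using that by (simp add: P_def)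
  qed
  define r where "r = (GREATEST r. P r)"
  have Pr: "P r" unfolding r_def by (rule GreatestI_nat[of P 1 n, OF P1 bnd])
  have r1: "1 \<le> r" unfolding r_def by (rule Greatest_le_nat[of P 1 n, OF P1 bnd])
  have "\<not> P (r + 1)"
  proof
    assume "P (r + 1)"
    then have "r + 1 \<le> (GREATEST r. P r)" by (rule Greatest_le_nat[of P "r+1" n, OF _ bnd])
    then show False unfolding r_def[symmetric] by simp
  qed
  then have "n < m * (2 ^ (r + 1) - 1)" by (simp add: P_def)
  also have "\<dots> \<le> m * 2 ^ (r + 1)" by simp
  finally show ?thesis using Pr r1 by (auto simp: P_def)
qed

lemma card_qedges: "card (qedges n) \<le> n * 2 ^ n"
proof -
  have "qedges n \<subseteq> (\<lambda>(u, j). {u, sd u {j}}) ` (Pow {..<n} \<times> {..<n})"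
  proof
    fix e assume "e \<in> qedges n"
    then obtain x j where "e = {x, sd x {j}}" "x \<subseteq> {..<n}" "j < n" by (rule qedge_form)
    then show "e \<in> (\<lambda>(u, j). {u, sd u {j}}) ` (Pow {..<n} \<times> {..<n})" by auto
  qed
  then have "card (qedges n) \<le> card ((\<lambda>(u, j). {u, sd u {j}}) ` (Pow {..<n} \<times> {..<n}))"
    by (intro card_mono) auto
  also have "\<dots> \<le> card (Pow {..<n} \<times> {..<n})" by (rule card_image_le) simp
  also have "\<dots> = n * 2 ^ n" by (simp add: card_cartesian_product card_Pow)
  finally show ?thesis .
qed

lemma s_sat_le: "semi_saturated n m G \<Longrightarrow> s_sat n m \<le> card G"
  unfolding s_sat_def by (rule Least_le) blast

theorem theorem2:
  fixes n m :: nat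
  assumes "n \<ge> 1" and "m \<ge> 1"
  shows "real (s_sat n m) < (real m ^ 2 + real m / 2) * 2 ^ n"
proof (cases "n < m")
  case True
  have "semi_saturated n m (qedges n)" unfolding semi_saturated_def by simp
  then have "s_sat n m \<le> n * 2 ^ n" using s_sat_le card_qedges le_trans by blast
  then have "real (s_sat n m) \<le> real n * 2 ^ n" by (metis of_nat_le_iff of_nat_mult of_nat_numeral of_nat_power)
  also have "\<dots> < real m * 2 ^ n" using True by simp
  also have "\<dots> \<le> (real m ^ 2 + real m / 2) * 2 ^ n"
  proof -
    have h: "real m \<le> real m ^ 2" using assms(2) by (simp add: power2_eq_square)
    have "real m \<le> real m ^ 2 + real m / 2" using h by linarith
    then show ?thesis by (rule mult_right_mono) simp
  qed
  finally show ?thesis .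
next
  case False
  then obtain r where r1: "r \<ge> 1" and mq: "m * (2 ^ r - 1) \<le> n" and nb: "n < m * 2 ^ (r + 1)"
    using exists_r assms by (meson not_less)
  interpret c: cons r "2 ^ r - 1" m n using r1 mq assms by unfold_locales auto
  have sle: "s_sat n m \<le> card c.GG" by (rule s_sat_le[OF c.sat])
  have cg: "card c.GG * 2 ^ r \<le> m * ((2 ^ r - 1) * 2 ^ n) + n * ((m - 1) * 2 ^ (n - 1))"
    by (rule c.card_GG)
  define C where "C = real (card c.GG)"
  define N where "N = (2::real) ^ n"
  define R where "R = (2::real) ^ r"
  have N0: "N > 0" and R0: "R > 0" by (simp_all add: N_def R_def)
  have RR: "real (2 ^ r - 1) = R - 1" unfolding R_def by (simp add: of_nat_diff)
  have NN: "real (2 ^ (n - 1)) = N / 2"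
  proof -
    obtain k where "n = Suc k" using assms(1) by (cases n) auto
    then show ?thesis unfolding N_def by simp
  qed
  have M1: "real (m - 1) = real m - 1" using assms(2) by (simp add: of_nat_diff)
  have "C * R \<le> real m * ((R - 1) * N) + real n * ((real m - 1) * (N / 2))"
  proof -
    have "real (card c.GG * 2 ^ r) \<le> real (m * ((2 ^ r - 1) * 2 ^ n) + n * ((m - 1) * 2 ^ (n - 1)))"
      using cg by (simp only: of_nat_le_iff)
    then show ?thesis unfolding C_def
      by (simp only: of_nat_mult of_nat_add RR NN M1) (simp add: R_def N_def)
  qed
  moreover have "real n * ((real m - 1) * N) \<le> (2 * real m * R) * ((real m - 1) * N)"
  proof (rule mult_right_mono)
    have "real n < real (m * 2 ^ (r + 1))" by (simp only: of_nat_less_iff nb)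
    moreover have "real (m * 2 ^ (r + 1)) = 2 * real m * R" unfolding R_def by simp
    ultimately show "real n \<le> 2 * real m * R" by linarith
    show "0 \<le> (real m - 1) * N" using assms(2) N0 by simp
  qed
  moreover have "real n * ((real m - 1) * (N / 2)) = (real n * ((real m - 1) * N)) / 2" by simp
  moreover have "(2 * real m * R) * ((real m - 1) * N) / 2 = real m * R * ((real m - 1) * N)" by simp
  ultimately have "C * R \<le> real m * ((R - 1) * N) + real m * R * ((real m - 1) * N)"
    by linarith
  also have "\<dots> = real m * real m * R * N - real m * N" by (simp add: algebra_simps)
  also have "\<dots> < (real m ^ 2 + real m / 2) * N * R"
  proof -
    have "0 < real m * N" using assms(2) N0 by simp
    moreover have "0 \<le> real m / 2 * N * R" using N0 R0 by simp
    ultimately show ?thesis by (simp add: algebra_simps power2_eq_square)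
  qed
  finally have "C < (real m ^ 2 + real m / 2) * N" using R0
    by (simp add: mult.assoc mult_less_cancel_right)
  then have "real (card c.GG) < (real m ^ 2 + real m / 2) * 2 ^ n" unfolding C_def N_def .
  then show ?thesis using sle by (meson le_less_trans of_nat_le_iff)
qed

end
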